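(* Let $T(n)=(3n+1)/2^{v_2(3n+1)}$ be the Syracuse map. For an odd positive integer $n$, let $L=v_2(n+1)-1$, let $r=v_2(3T^L(n)+1)$, and let $n'=T^{L+1}(n)$. Then $$\log_2\frac{n'}{n}=X(n)+C(n),\qquad X(n)=(L+1)\log_2 3-(L+r),\qquad C(n)=\log_2\!\Bigl(1+\frac{1-(2/3)^{L+1}}{n}\Bigr).$$ The correction satisfies $0<C(n)<\log_2(1+1/n)$, and (for fixed $L$) $C(n)$ is monotonically decreasing in $n$.
   Context: $v_2$ is the $2$-adic valuation, $T^j$ the $j$-th iterate of $T$. *)

theory Defs
  imports Complex_Main "HOL-Computational_Algebra.Primes"
begin

definition v2 :: "nat \<Rightarrow> nat" where
  "v2 k = multiplicity (2::nat) k"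

definition syracuse :: "nat \<Rightarrow> nat" where
  "syracuse k = (3 * k + 1) div 2 ^ v2 (3 * k + 1)"

definition syrX :: "nat \<Rightarrow> nat \<Rightarrow> real" where
  "syrX L r = real (L + 1) * log 2 3 - real (L + r)"

definition syrC :: "nat \<Rightarrow> nat \<Rightarrow> real" where
  "syrC L k = log 2 (1 + (1 - (2/3) ^ (L + 1)) / real k)"

end

theory Submission
  imports Defs
begin

lemma v2_one: assumes "x mod 4 = (2::nat)" shows "v2 x = 1"
  unfolding v2_def
proof (rule multiplicity_eqI)
  show "(2::nat) ^ 1 dvd x" using assms by simp presburger
  show "\<not> (2::nat) ^ Suc 1 dvd x" using assms by simp presburger
qed

lemma iter_step:
  fixes n :: nat
  assumes "2 ^ (L+1) dvd n + 1"
  shows "j \<le> L \<Longrightarrow> 2 ^ j * ((syracuse ^^ j) n + 1) = 3 ^ j * (n + 1)"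
proof (induction j)
  case 0 then show ?case by simp
next
  case (Suc j)
  define m where "m = (syracuse ^^ j) n"
  have IH: "2 ^ j * (m + 1) = 3 ^ j * (n + 1)" using Suc unfolding m_def by simp
  have "(2::nat) ^ (j+2) dvd 2 ^ (L+1)" using Suc.prems by (intro le_imp_power_dvd) simp
  hence "(2::nat) ^ (j+2) dvd n + 1" using assms dvd_trans by blast
  hence "(2::nat) ^ j * 4 dvd n + 1" by (simp add: power_add mult.commute)
  hence "(2::nat) ^ j * 4 dvd 3 ^ j * (n + 1)" by (rule dvd_mult)
  hence "(2::nat) ^ j * 4 dvd 2 ^ j * (m + 1)" using IH by simp
  hence "4 dvd m + 1" by (metis nat_mult_dvd_cancel_disj power_not_zero zero_neq_numeral)
  then obtain q where q: "m + 1 = 4 * q" by blast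
  have q1: "q \<ge> 1" using q by simp
  have "(3 * m + 1) mod 4 = 2" using q by presburger
  hence v: "v2 (3 * m + 1) = 1" by (rule v2_one)
  have "syracuse m = (3 * m + 1) div 2" unfolding syracuse_def v by simp
  hence "syracuse m + 1 = 6 * q" using q q1 by presburger
  hence "(syracuse ^^ Suc j) n + 1 = 6 * q" unfolding m_def by simp
  moreover have "2^j*(4*q) = 3^j*(n+1)" using IH q by metis
  moreover have "(2::nat)^Suc j * (6*q) = 3 * (2^j*(4*q))" by simp
  ultimately show ?case by simp
qed

lemma log_split:
  fixes n :: nat and L r :: nat and A :: real
  assumes "n > 0" "A * 2 ^ (L + r) = 3 ^ (L+1) * (real n + 1) - 2 ^ (L+1)"
  shows "log 2 (A / real n) = syrX L r + syrC L n"
proof -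
  have h: "(3::real)^(L+1) * (2/3)^(L+1) = 2^(L+1)" by (simp add: power_mult_distrib[symmetric])
  have A: "A = (3 ^ (L+1) * (real n + 1) - 2 ^ (L+1)) / 2 ^ (L+r)"
    using assms(2) by (simp add: eq_divide_eq)
  have "3 ^ (L+1) / 2 ^ (L+r) * (1 + (1 - (2/3) ^ (L + 1)) / real n)
     = 3 ^ (L+1) / 2 ^ (L+r) * ((real n + 1 - (2/3) ^ (L + 1)) / real n)"
    using assms(1) by (simp add: add_divide_distrib diff_divide_distrib)
  also have "\<dots> = (3 ^ (L+1) * (real n + 1) - 3^(L+1) * (2/3) ^ (L + 1)) / (2 ^ (L+r) * real n)"
    by (simp only: times_divide_times_eq right_diff_distrib)
  also have "\<dots> = A / real n" unfolding h A using assms(1) by (simp add: field_simps)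
  finally have eq: "A / real n = 3 ^ (L+1) / 2 ^ (L+r) * (1 + (1 - (2/3) ^ (L + 1)) / real n)" ..
  have pos: "0 < 1 + (1 - (2/3::real) ^ (L + 1)) / real n"
  proof -
    have "(2/3::real) ^ (L+1) < 1" using power_less_one_iff[of "2/3::real" "L+1"] by simp
    thus ?thesis using assms by (simp add: add_pos_nonneg)
  qed
  have "log 2 (A / real n) = log 2 (3 ^ (L+1) / 2 ^ (L+r)) + syrC L n"
    unfolding eq syrC_def by (subst log_mult) (use pos in auto)
  also have "log 2 (3 ^ (L+1) / 2 ^ (L+r)) = syrX L r"
  proof -
    have a: "log 2 ((3::real)^(L+1)) = real(L+1) * log 2 3" by (rule log_nat_power) simp
    have b: "log 2 ((2::real)^(L+r)) = real(L+r)" by (simp add: log_nat_power)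
    show ?thesis unfolding syrX_def by (subst log_divide) (simp_all only: a b, simp_all)
  qed
  finally show ?thesis .
qed

theorem mainTheorem4:
  fixes n :: nat
  assumes "odd n" and "n > 0"
  shows "let L = v2 (n + 1) - 1;
             r = v2 (3 * (syracuse ^^ L) n + 1);
             n' = (syracuse ^^ (L + 1)) n
         in log 2 (real n' / real n) = syrX L r + syrC L n
            \<and> 0 < syrC L n \<and> syrC L n < log 2 (1 + 1 / real n)
            \<and> (\<forall>m::nat. odd m \<and> v2 (m + 1) - 1 = L \<and> n < m \<longrightarrow> syrC L m < syrC L n)"
proof -
  define L where "L = v2 (n + 1) - 1"
  define M where "M = (syracuse ^^ L) n"
  define r where "r = v2 (3 * M + 1)"
  have k1: "v2 (n+1) \<ge> 1" unfolding v2_def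
    by (rule multiplicity_geI) (use assms(1) in auto)
  have "(2::nat) ^ (L+1) dvd n + 1" unfolding L_def v2_def using k1 multiplicity_dvd
    by (simp add: v2_def)
  from iter_step[OF this order.refl] have IM: "2 ^ L * (M + 1) = 3 ^ L * (n + 1)"
    unfolding M_def .
  have dv: "2 ^ r dvd 3 * M + 1" unfolding r_def v2_def by (rule multiplicity_dvd)
  have n': "(syracuse ^^ (L + 1)) n = (3 * M + 1) div 2 ^ r"
    unfolding M_def r_def by (simp add: syracuse_def)
  have "real ((3 * M + 1) div 2 ^ r) * 2 ^ r = real (3 * M + 1)"
    using dv by (metis dvd_div_mult_self of_nat_mult of_nat_numeral of_nat_power)
  hence e1: "real ((3 * M + 1) div 2 ^ r) * 2 ^ (L + r) = 2 ^ L * real (3 * M + 1)"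
    by (simp add: power_add algebra_simps)
  have "real (2 ^ L * (M + 1)) = real (3 ^ L * (n + 1))" using IM by metis
  hence "2 ^ L * (real M + 1) = 3 ^ L * (real n + 1)" by (simp add: algebra_simps)
  hence "2 ^ L * real (3 * M + 1) = 3 ^ (L+1) * (real n + 1) - 2 ^ (L+1)"
    by (simp add: algebra_simps)
  with e1 have A: "real ((syracuse ^^ (L + 1)) n) * 2 ^ (L + r) = 3 ^ (L+1) * (real n + 1) - 2 ^ (L+1)"
    unfolding n' by simp
  have p: "(2/3::real) ^ (L+1) < 1" using power_less_one_iff[of "2/3::real" "L+1"] by simp
  have p0: "0 < (2/3::real) ^ (L+1)" by simp
  have "0 < (1 - (2/3::real)^(L+1))/real n" using p assms(2) by simp
  hence c1: "0 < syrC L n" unfolding syrC_def by simp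
  have c2: "syrC L n < log 2 (1 + 1 / real n)" unfolding syrC_def using p p0 assms(2)
    by (subst log_less_cancel_iff) (auto simp: divide_strict_right_mono add_pos_nonneg)
  have c3: "syrC L m < syrC L n" if "n < m" for m :: nat
  proof -
    have "(1 - (2/3::real) ^ (L+1)) / real m < (1 - (2/3) ^ (L+1)) / real n"
      using that assms(2) p by (intro divide_strict_left_mono) auto
    thus ?thesis unfolding syrC_def using p assms(2) that
      by (subst log_less_cancel_iff) (auto simp: add_pos_nonneg)
  qed
  show ?thesis unfolding Let_def L_def[symmetric] M_def[symmetric] r_def[symmetric]
    using log_split[OF assms(2) A] c1 c2 c3 by blast
qed

end
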